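(* Let $n\ge2$ and let $\boldsymbol x^*$ be a pure Nash equilibrium of $\mathcal L(n,S)$. Then all $\boldsymbol x^*$-balanced players obtain the same payoff.
   Context: Network: $(V,E)$ is a finite connected graph with no vertex of degree $2$; each edge $e$ has a length $\lambda(e)>0$. $S$ is the metric measure space obtained by identifying each edge with a segment of length $\lambda(e)$, with length measure $\lambda$ and shortest-path distance $d$. Vertices have their graph degree, and interior points of edges have degree $2$. Location game $\mathcal L(n,S)$: $n$ players each choose a point of $S$. Consumers are distributed according to $\lambda$, and each shops at a closest occupied location. Consumers equidistant from several closest occupied locations are split equally among those locations, and the share of a location is split equally among the players located there. Payoff is the mass of consumers attracted. Nash equilibria are pure. For a profile $\boldsymbol x$ and $w\in S$: if $\operatorname{card}\{i:x_i=w\}=\operatorname{degree}(w)$, the players located at $w$ are called $\boldsymbol x$-balanced and $w$ is called $\boldsymbol x$-saturated. *)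

theory Defs
  imports "HOL-Analysis.Analysis"
begin

text \<open>A network: vertex set V, a simple graph whose edges are stored with one
orientation as pairs (u,w) in E, and edge lengths lam e > 0.
The metric graph S has points: vertices Vx v, and interior edge points Ed e t
with 0 < t < lam e (t = distance from fst e along e).\<close>

datatype 'v pt = Vx 'v | Ed "'v \<times> 'v" real

definition adj :: "('v \<times> 'v) set \<Rightarrow> 'v \<Rightarrow> 'v \<Rightarrow> bool" where
  "adj E u w \<longleftrightarrow> (u, w) \<in> E \<or> (w, u) \<in> E"

definition elen :: "('v \<times> 'v) set \<Rightarrow> ('v \<times> 'v \<Rightarrow> real) \<Rightarrow> 'v \<Rightarrow> 'v \<Rightarrow> real" where
  "elen E lam u w = (if (u, w) \<in> E then lam (u, w) else lam (w, u))"

definition is_walk :: "('v \<times> 'v) set \<Rightarrow> 'v list \<Rightarrow> bool" where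
  "is_walk E ws \<longleftrightarrow> ws \<noteq> [] \<and> (\<forall>i. Suc i < length ws \<longrightarrow> adj E (ws ! i) (ws ! Suc i))"

fun walk_len :: "('v \<times> 'v) set \<Rightarrow> ('v \<times> 'v \<Rightarrow> real) \<Rightarrow> 'v list \<Rightarrow> real" where
  "walk_len E lam (a # b # r) = elen E lam a b + walk_len E lam (b # r)"
| "walk_len E lam _ = 0"

definition vdist :: "('v \<times> 'v) set \<Rightarrow> ('v \<times> 'v \<Rightarrow> real) \<Rightarrow> 'v \<Rightarrow> 'v \<Rightarrow> real" where
  "vdist E lam u w = Inf {walk_len E lam ws | ws. is_walk E ws \<and> hd ws = u \<and> last ws = w}"

definition connected_graph :: "'v set \<Rightarrow> ('v \<times> 'v) set \<Rightarrow> bool" where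
  "connected_graph V E \<longleftrightarrow> (\<forall>u\<in>V. \<forall>w\<in>V. \<exists>ws. is_walk E ws \<and> hd ws = u \<and> last ws = w)"

definition vdegree :: "('v \<times> 'v) set \<Rightarrow> 'v \<Rightarrow> nat" where
  "vdegree E v = card {e \<in> E. fst e = v \<or> snd e = v}"

definition network :: "'v set \<Rightarrow> ('v \<times> 'v) set \<Rightarrow> ('v \<times> 'v \<Rightarrow> real) \<Rightarrow> bool" where
  "network V E lam \<longleftrightarrow> finite V \<and> V \<noteq> {} \<and> E \<subseteq> V \<times> V
     \<and> (\<forall>(u, w) \<in> E. u \<noteq> w \<and> (w, u) \<notin> E)
     \<and> (\<forall>e\<in>E. lam e > 0)
     \<and> connected_graph V E
     \<and> (\<forall>v\<in>V. vdegree E v \<noteq> 2)"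

definition points :: "'v set \<Rightarrow> ('v \<times> 'v) set \<Rightarrow> ('v \<times> 'v \<Rightarrow> real) \<Rightarrow> 'v pt set" where
  "points V E lam = Vx ` V \<union> {Ed e t | e t. e \<in> E \<and> 0 < t \<and> t < lam e}"

fun pdegree :: "('v \<times> 'v) set \<Rightarrow> 'v pt \<Rightarrow> nat" where
  "pdegree E (Vx v) = vdegree E v"
| "pdegree E (Ed e t) = 2"

fun anchors :: "('v \<times> 'v \<Rightarrow> real) \<Rightarrow> 'v pt \<Rightarrow> ('v \<times> real) set" where
  "anchors lam (Vx v) = {(v, 0)}"
| "anchors lam (Ed e t) = {(fst e, t), (snd e, lam e - t)}"

definition sdist :: "('v \<times> 'v) set \<Rightarrow> ('v \<times> 'v \<Rightarrow> real) \<Rightarrow> 'v pt \<Rightarrow> 'v pt \<Rightarrow> real" where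
  "sdist E lam p q =
     (let c = Min {ao + vdist E lam a b + bo | a ao b bo.
                     (a, ao) \<in> anchors lam p \<and> (b, bo) \<in> anchors lam q}
      in (case (p, q) of
            (Ed e t, Ed e' s) \<Rightarrow> (if e = e' then min c \<bar>t - s\<bar> else c)
          | _ \<Rightarrow> c))"

definition edge_pt :: "('v \<times> 'v \<Rightarrow> real) \<Rightarrow> 'v \<times> 'v \<Rightarrow> real \<Rightarrow> 'v pt" where
  "edge_pt lam e t = (if t = 0 then Vx (fst e) else if t = lam e then Vx (snd e) else Ed e t)"

definition share :: "('v \<times> 'v) set \<Rightarrow> ('v \<times> 'v \<Rightarrow> real) \<Rightarrow> nat \<Rightarrow> (nat \<Rightarrow> 'v pt) \<Rightarrow> nat \<Rightarrow> 'v pt \<Rightarrow> real" where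
  "share E lam n x i y =
     (let Occ = x ` {..<n};
          m = Min ((\<lambda>z. sdist E lam y z) ` Occ);
          C = {z \<in> Occ. sdist E lam y z = m}
      in if x i \<in> C then 1 / real (card C) / real (card {j. j < n \<and> x j = x i}) else 0)"

definition payoff :: "('v \<times> 'v) set \<Rightarrow> ('v \<times> 'v \<Rightarrow> real) \<Rightarrow> nat \<Rightarrow> (nat \<Rightarrow> 'v pt) \<Rightarrow> nat \<Rightarrow> real" where
  "payoff E lam n x i = (\<Sum>e\<in>E. integral {0 .. lam e} (\<lambda>t. share E lam n x i (edge_pt lam e t)))"

definition is_profile :: "'v set \<Rightarrow> ('v \<times> 'v) set \<Rightarrow> ('v \<times> 'v \<Rightarrow> real) \<Rightarrow> nat \<Rightarrow> (nat \<Rightarrow> 'v pt) \<Rightarrow> bool" where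
  "is_profile V E lam n x \<longleftrightarrow> (\<forall>i<n. x i \<in> points V E lam)"

definition nash_eq :: "'v set \<Rightarrow> ('v \<times> 'v) set \<Rightarrow> ('v \<times> 'v \<Rightarrow> real) \<Rightarrow> nat \<Rightarrow> (nat \<Rightarrow> 'v pt) \<Rightarrow> bool" where
  "nash_eq V E lam n x \<longleftrightarrow> is_profile V E lam n x \<and>
     (\<forall>i<n. \<forall>y\<in>points V E lam. payoff E lam n (x(i := y)) i \<le> payoff E lam n x i)"

definition balanced :: "('v \<times> 'v) set \<Rightarrow> nat \<Rightarrow> (nat \<Rightarrow> 'v pt) \<Rightarrow> nat \<Rightarrow> bool" where
  "balanced E n x i \<longleftrightarrow> i < n \<and> card {j. j < n \<and> x j = x i} = pdegree E (x i)"

end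

theory Submission
  imports Defs
begin

lemma anchors_finite: "finite (anchors lam p)"
  by (cases p) auto

lemma sdist_set_eq:
  "{ao + vdist E lam a b + bo | a ao b bo. (a, ao) \<in> anchors lam p \<and> (b, bo) \<in> anchors lam q}
   = (\<lambda>((a,ao),(b,bo)). ao + vdist E lam a b + bo) ` (anchors lam p \<times> anchors lam q)"
  by (auto simp: image_iff) force+

lemma sdist_Ed_eq:
  "sdist E lam (Ed e t) z = (let c = Min ((\<lambda>(k,b,bo). (if k then t + vdist E lam (fst e) b else lam e - t + vdist E lam (snd e) b) + bo) ` (UNIV \<times> anchors lam z))
     in case z of Ed e' s \<Rightarrow> if e = e' then min c \<bar>t - s\<bar> else c | _ \<Rightarrow> c)"
proof -
  let ?f = "\<lambda>((a,ao),(b,bo)). ao + vdist E lam a b + bo"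
  let ?g = "\<lambda>(k,b,bo). (if k then t + vdist E lam (fst e) b else lam e - t + vdist E lam (snd e) b) + bo"
  have "?f ` (anchors lam (Ed e t) \<times> anchors lam z) = ?g ` (UNIV \<times> anchors lam z)"
  proof (rule set_eqI, rule iffI)
    fix r assume "r \<in> ?f ` (anchors lam (Ed e t) \<times> anchors lam z)"
    then obtain a ao b bo where r: "(a, ao) \<in> anchors lam (Ed e t)" "(b, bo) \<in> anchors lam z" "r = ao + vdist E lam a b + bo"
      by auto
    show "r \<in> ?g ` (UNIV \<times> anchors lam z)"
    proof (cases "(a, ao) = (fst e, t)")
      case True
      then show ?thesis using r by (intro rev_image_eqI[of "(True, b, bo)"]) auto
    next
      case False
      then have "(a, ao) = (snd e, lam e - t)" using r(1) by auto
      then show ?thesis using r by (intro rev_image_eqI[of "(False, b, bo)"]) auto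
    qed
  next
    fix r assume "r \<in> ?g ` (UNIV \<times> anchors lam z)"
    then obtain k b bo where r: "(b, bo) \<in> anchors lam z" "r = ?g (k, b, bo)" by auto
    show "r \<in> ?f ` (anchors lam (Ed e t) \<times> anchors lam z)"
    proof (cases k)
      case True
      then show ?thesis using r by (intro rev_image_eqI[of "((fst e, t), (b, bo))"]) auto
    next
      case False
      then show ?thesis using r by (intro rev_image_eqI[of "((snd e, lam e - t), (b, bo))"]) auto
    qed
  qed
  then show ?thesis unfolding sdist_def sdist_set_eq by (cases z) auto
qed

lemma sdist_meas: "(\<lambda>t. sdist E lam (edge_pt lam e t) z) \<in> borel_measurable borel"
proof -
  have 1: "(\<lambda>t. sdist E lam (Ed e t) z) \<in> borel_measurable borel"
    unfolding sdist_Ed_eq Let_def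
    apply (cases z)
     apply (auto intro!: borel_measurable_Min simp: anchors_finite split: prod.splits)
    done
  have 2: "(\<lambda>t. sdist E lam (edge_pt lam e t) z) = (\<lambda>t. if t = 0 then sdist E lam (Vx (fst e)) z else if t = lam e then sdist E lam (Vx (snd e)) z else sdist E lam (Ed e t) z)"
    by (auto simp: edge_pt_def)
  show ?thesis unfolding 2 using 1 by measurable
qed

lemma bounded_meas_integrable:
  fixes f :: "real \<Rightarrow> real"
  assumes "f \<in> borel_measurable borel" "\<And>t. \<bar>f t\<bar> \<le> B"
  shows "f integrable_on {a..b}"
proof (rule measurable_bounded_by_integrable_imp_integrable_real[where g="\<lambda>_. B"])
  show "f \<in> borel_measurable (lebesgue_on {a..b})"
    using assms(1) by (simp add: measurable_completion measurable_restrict_space1)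
  show "(\<lambda>_. B) integrable_on {a..b}" by (rule integrable_const_ivl)
qed (use assms in auto)

lemma share_alt:
  assumes "k < n"
  shows "share E lam n x k y =
    (if sdist E lam y (x k) = Min ((\<lambda>z. sdist E lam y z) ` (x ` {..<n})) then 1 else 0)
    / (\<Sum>z\<in>x ` {..<n}. if sdist E lam y z = Min ((\<lambda>z. sdist E lam y z) ` (x ` {..<n})) then 1 else 0)
    / real (card {j. j < n \<and> x j = x k})"
proof -
  let ?m = "Min ((\<lambda>z. sdist E lam y z) ` (x ` {..<n}))"
  have s: "{z \<in> x ` {..<n}. sdist E lam y z = ?m} = x ` {..<n} \<inter> {z. sdist E lam y z = ?m}" by blast
  have c: "real (card {z \<in> x ` {..<n}. sdist E lam y z = ?m}) = (\<Sum>z\<in>x ` {..<n}. if sdist E lam y z = ?m then 1 else 0)"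
    unfolding s by (simp add: sum.If_cases)
  show ?thesis
    unfolding share_def Let_def using assms c by (auto)
qed

lemma share_meas:
  assumes "k < n"
  shows "(\<lambda>t. share E lam n x k (edge_pt lam e t)) \<in> borel_measurable borel"
  unfolding share_alt[OF assms]
  using sdist_meas[measurable] by measurable

lemma share_nonneg: "0 \<le> share E lam n x k y"
  unfolding share_def Let_def by auto

lemma share_le1: "share E lam n x k y \<le> 1"
proof -
  have "1 / real c / real d \<le> 1" for c d :: nat
    by (cases "c = 0"; cases "d = 0") (auto simp: divide_le_eq intro: order.trans[OF _ mult_right_mono[of 1]])
  then show ?thesis unfolding share_def Let_def by auto
qed

lemma share_integrable:
  assumes "k < n"
  shows "(\<lambda>t. share E lam n x k (edge_pt lam e t)) integrable_on {a..b}"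
  by (rule bounded_meas_integrable[OF share_meas[OF assms], where B=1])
     (use share_nonneg share_le1 in \<open>auto simp: abs_le_iff intro: order.trans[OF _ share_nonneg]\<close>)

definition Rp :: "('v \<times> 'v) set \<Rightarrow> ('v \<times> 'v \<Rightarrow> real) \<Rightarrow> nat \<Rightarrow> (nat \<Rightarrow> 'v pt) \<Rightarrow> 'v pt \<Rightarrow> 'v pt \<Rightarrow> bool" where
  "Rp E lam n x w y \<longleftrightarrow> (\<forall>z\<in>x ` {..<n}. sdist E lam y w \<le> sdist E lam y z)"

lemma Rp_meas: "(\<lambda>t. if Rp E lam n x w (edge_pt lam e t) then 1 else 0 :: real) \<in> borel_measurable borel"
  unfolding Rp_def using sdist_meas[measurable] by measurable

lemma Rp_integrable: "(\<lambda>t. if Rp E lam n x w (edge_pt lam e t) then 1 else 0 :: real) integrable_on {a..b}"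
  by (rule bounded_meas_integrable[OF Rp_meas, where B=1]) auto

lemma share_le_Rp:
  assumes "j < n"
  shows "share E lam n x j y \<le> (if Rp E lam n x (x j) y then 1 else 0) / real (card {k. k < n \<and> x k = x j})"
proof -
  let ?Occ = "x ` {..<n}"
  let ?m = "Min ((\<lambda>z. sdist E lam y z) ` ?Occ)"
  let ?C = "{z \<in> ?Occ. sdist E lam y z = ?m}"
  show ?thesis
  proof (cases "x j \<in> ?C")
    case True
    then have "Rp E lam n x (x j) y" unfolding Rp_def by auto
    moreover have "card ?C \<ge> 1" 
    proof -
      have "finite ?C" by simp
      then have "card ?C > 0" using True card_gt_0_iff by blast
      then show ?thesis by simp
    qed
    moreover have "1 / real (card ?C) / real (card {k. k < n \<and> x k = x j}) \<le> 1 / real (card {k. k < n \<and> x k = x j})"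
      using \<open>card ?C \<ge> 1\<close> by (intro divide_right_mono) auto
    ultimately show ?thesis unfolding share_def Let_def using True
      by auto
  next
    case False
    then show ?thesis unfolding share_def Let_def by auto
  qed
qed

lemma generic:
  fixes Dirs :: "'d set" and q :: "'d \<Rightarrow> 'v pt" and h :: "'d \<Rightarrow> 'v \<times> 'v \<Rightarrow> real \<Rightarrow> real"
  assumes finE: "finite E" and jn: "j < n" and iN: "i < n"
    and nash: "\<forall>\<delta>\<in>Dirs. payoff E lam n (x(i := q \<delta>)) i \<le> payoff E lam n x i"
    and cardD: "card Dirs = card {k. k < n \<and> x k = x j}"
    and finD: "finite Dirs"
    and hint: "\<forall>\<delta>\<in>Dirs. \<forall>e\<in>E. h \<delta> e integrable_on {0..lam e}"
    and hnn: "\<forall>\<delta> e t. 0 \<le> h \<delta> e t"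
    and hsum: "\<forall>\<delta>\<in>Dirs. (\<Sum>e\<in>E. integral {0..lam e} (h \<delta> e)) \<le> \<epsilon>"
    and pw: "\<forall>e\<in>E. \<exists>Z. finite Z \<and> (\<forall>t\<in>{0..lam e} - Z. Rp E lam n x (x j) (edge_pt lam e t) \<longrightarrow>
              1 \<le> (\<Sum>\<delta>\<in>Dirs. share E lam n (x(i := q \<delta>)) i (edge_pt lam e t) + h \<delta> e t))"
  shows "payoff E lam n x j \<le> payoff E lam n x i + \<epsilon>"
proof -
  define d where "d = real (card {k. k < n \<and> x k = x j})"
  have d1: "d \<ge> 1"
  proof -
    have "finite {k. k < n \<and> x k = x j}" by simp
    moreover have "j \<in> {k. k < n \<and> x k = x j}" using jn by simp
    ultimately have "card {k. k < n \<and> x k = x j} > 0" using card_gt_0_iff by blast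
    then show ?thesis unfolding d_def by simp
  qed
  define R where "R e = (\<lambda>t. if Rp E lam n x (x j) (edge_pt lam e t) then 1 else 0 :: real)" for e
  define S where "S e = (\<lambda>t. \<Sum>\<delta>\<in>Dirs. share E lam n (x(i := q \<delta>)) i (edge_pt lam e t) + h \<delta> e t)" for e
  have Sint: "S e integrable_on {0..lam e}" if "e \<in> E" for e
    unfolding S_def using hint that iN finD
    by (intro integrable_sum integrable_add share_integrable) auto
  have Sval: "integral {0..lam e} (S e) = (\<Sum>\<delta>\<in>Dirs. integral {0..lam e} (\<lambda>t. share E lam n (x(i := q \<delta>)) i (edge_pt lam e t)) + integral {0..lam e} (h \<delta> e))"
    if "e \<in> E" for e
    unfolding S_def using hint that iN finD
    by (subst integral_sum) (auto intro!: sum.cong integral_add share_integrable integrable_add)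
  have step: "integral {0..lam e} (\<lambda>t. share E lam n x j (edge_pt lam e t)) \<le> integral {0..lam e} (S e) / d"
    if e: "e \<in> E" for e
  proof -
    obtain Z where Z: "finite Z" "\<forall>t\<in>{0..lam e} - Z. Rp E lam n x (x j) (edge_pt lam e t) \<longrightarrow> 1 \<le> S e t"
      using pw e unfolding S_def by blast
    define R' where "R' = (\<lambda>t. if t \<in> Z then 0 else R e t)"
    have "integral {0..lam e} (\<lambda>t. share E lam n x j (edge_pt lam e t)) \<le> integral {0..lam e} (\<lambda>t. R e t / d)"
      apply (rule integral_le)
        apply (rule share_integrable[OF jn])
       apply (unfold R_def, rule integrable_on_divide, rule Rp_integrable)
      unfolding R_def d_def by (rule share_le_Rp[OF jn])
    also have "\<dots> = integral {0..lam e} (R e) / d"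
      by simp
    also have "integral {0..lam e} (R e) = integral {0..lam e} R'"
      unfolding R'_def by (rule integral_spike[where S=Z]) (use Z in \<open>auto intro: negligible_finite\<close>)
    also have "integral {0..lam e} R' \<le> integral {0..lam e} (S e)"
    proof (rule integral_le)
      show "R' integrable_on {0..lam e}"
        unfolding R'_def
        by (rule integrable_spike_finite[OF Z(1), where f="R e"]) (auto simp: R_def intro: Rp_integrable)
      show "S e integrable_on {0..lam e}" using Sint e .
      show "R' t \<le> S e t" if "t \<in> {0..lam e}" for t
      proof -
        have "0 \<le> S e t" unfolding S_def by (intro sum_nonneg add_nonneg_nonneg share_nonneg hnn[rule_format])
        then show ?thesis using Z(2) that unfolding R'_def R_def by auto
      qed
    qed
    finally show ?thesis using d1 by (simp add: divide_right_mono)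
  qed
  have "payoff E lam n x j = (\<Sum>e\<in>E. integral {0..lam e} (\<lambda>t. share E lam n x j (edge_pt lam e t)))"
    unfolding payoff_def ..
  also have "\<dots> \<le> (\<Sum>e\<in>E. integral {0..lam e} (S e) / d)"
    by (rule sum_mono) (rule step)
  also have "\<dots> = (\<Sum>e\<in>E. \<Sum>\<delta>\<in>Dirs. integral {0..lam e} (\<lambda>t. share E lam n (x(i := q \<delta>)) i (edge_pt lam e t)) + integral {0..lam e} (h \<delta> e)) / d"
    by (simp add: Sval sum_divide_distrib)
  also have "(\<Sum>e\<in>E. \<Sum>\<delta>\<in>Dirs. integral {0..lam e} (\<lambda>t. share E lam n (x(i := q \<delta>)) i (edge_pt lam e t)) + integral {0..lam e} (h \<delta> e))
     = (\<Sum>\<delta>\<in>Dirs. payoff E lam n (x(i := q \<delta>)) i + (\<Sum>e\<in>E. integral {0..lam e} (h \<delta> e)))"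
    unfolding payoff_def by (subst sum.swap) (simp add: sum.distrib)
  also have "\<dots> \<le> (\<Sum>\<delta>\<in>Dirs. payoff E lam n x i + \<epsilon>)"
    using nash hsum by (intro sum_mono add_mono) auto
  also have "\<dots> = d * (payoff E lam n x i + \<epsilon>)"
    using cardD unfolding d_def by simp
  finally show ?thesis using d1 by (simp add: divide_right_mono)
qed

lemma walk_len_snoc: "ws \<noteq> [] \<Longrightarrow> walk_len E lam (ws @ [b]) = walk_len E lam ws + elen E lam (last ws) b"
  by (induction E lam ws rule: walk_len.induct) auto

lemma walk_len_nonneg:
  assumes "\<forall>e\<in>E. lam e > 0" "\<forall>i. Suc i < length ws \<longrightarrow> adj E (ws ! i) (ws ! Suc i)"
  shows "walk_len E lam ws \<ge> 0"
  using assms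
proof (induction E lam ws rule: walk_len.induct)
  case (1 E lam a b r)
  have "adj E a b" using "1.prems"(2)[rule_format, of 0] by simp
  then have "elen E lam a b > 0" using "1.prems"(1) unfolding adj_def elen_def by auto
  moreover have "walk_len E lam (b # r) \<ge> 0"
  proof (rule "1.IH")
    show "\<forall>e\<in>E. 0 < lam e" using "1.prems"(1) .
    show "\<forall>i. Suc i < length (b # r) \<longrightarrow> adj E ((b # r) ! i) ((b # r) ! Suc i)"
      using "1.prems"(2) by (metis Suc_mono length_Cons nth_Cons_Suc)
  qed
  ultimately show ?case by simp
qed auto

lemma network_facts:
  assumes "network V E lam"
  shows "finite V" "finite E" "E \<subseteq> V \<times> V" "\<And>e. e \<in> E \<Longrightarrow> lam e > 0"
    "\<And>u w. (u, w) \<in> E \<Longrightarrow> u \<noteq> w \<and> (w, u) \<notin> E" "connected_graph V E"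
proof -
  show "finite V" "E \<subseteq> V \<times> V" using assms unfolding network_def by auto
  then show "finite E" by (meson finite_SigmaI rev_finite_subset)
  show "\<And>e. e \<in> E \<Longrightarrow> lam e > 0" "connected_graph V E" using assms unfolding network_def by auto
  show "\<And>u w. (u, w) \<in> E \<Longrightarrow> u \<noteq> w \<and> (w, u) \<notin> E" using assms unfolding network_def by fast
qed

lemma bellman:
  assumes net: "network V E lam" and aV: "a \<in> V" and uV: "u \<in> V" and au: "a \<noteq> u"
  shows "\<exists>v. adj E v u \<and> vdist E lam a v + elen E lam v u \<le> vdist E lam a u"
proof -
  note nf = network_facts[OF net]
  define W where "W = {walk_len E lam ws | ws. is_walk E ws \<and> hd ws = a \<and> last ws = u}"
  have bdd: "bdd_below {walk_len E lam ws | ws. is_walk E ws \<and> hd ws = a' \<and> last ws = b'}" for a' b'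
  proof (rule bdd_belowI[where m=0])
    fix r assume "r \<in> {walk_len E lam ws | ws. is_walk E ws \<and> hd ws = a' \<and> last ws = b'}"
    then obtain ws where "is_walk E ws" "r = walk_len E lam ws" by blast
    then show "0 \<le> r" using walk_len_nonneg[of E lam ws] nf(4) unfolding is_walk_def by auto
  qed
  define N where "N = {v. adj E v u}"
  have finN: "finite N"
  proof -
    have "N \<subseteq> fst ` E \<union> snd ` E" unfolding N_def adj_def by force
    then show ?thesis using nf(2) by (meson finite_Un finite_imageI rev_finite_subset)
  qed
  define g where "g v = vdist E lam a v + elen E lam v u" for v
  have key: "\<exists>v\<in>N. g v \<le> walk_len E lam ws" if ws: "is_walk E ws" "hd ws = a" "last ws = u" for ws
  proof -
    have ne: "ws \<noteq> []" using ws unfolding is_walk_def by auto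
    define ws' where "ws' = butlast ws"
    have wseq: "ws = ws' @ [u]" using ne ws unfolding ws'_def by (metis append_butlast_last_id)
    have ne': "ws' \<noteq> []" using wseq ws au by auto
    have adj_all: "\<forall>i. Suc i < length ws \<longrightarrow> adj E (ws ! i) (ws ! Suc i)" using ws unfolding is_walk_def by auto
    have w': "is_walk E ws'"
    proof -
      have "adj E (ws' ! i) (ws' ! Suc i)" if si: "Suc i < length ws'" for i
      proof -
        have "Suc i < length ws" using si wseq by simp
        moreover have "ws ! i = ws' ! i" "ws ! Suc i = ws' ! Suc i" using si wseq by (simp_all add: nth_append)
        ultimately show ?thesis using adj_all by metis
      qed
      then show ?thesis unfolding is_walk_def using ne' by blast
    qed
    have "adj E (last ws') u"
    proof -
      have "Suc (length ws' - 1) < length ws" using wseq ne' by auto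
      then have "adj E (ws ! (length ws' - 1)) (ws ! Suc (length ws' - 1))" using adj_all by blast
      then show ?thesis using wseq ne' by (auto simp: nth_append last_conv_nth)
    qed
    moreover have "vdist E lam a (last ws') \<le> walk_len E lam ws'"
      unfolding vdist_def
      apply (rule cInf_lower) using w' ne' ws wseq bdd apply auto
      done
    ultimately show ?thesis unfolding N_def g_def
      by (intro bexI[of _ "last ws'"]) (auto simp: wseq walk_len_snoc[OF ne'])
  qed
  obtain ws0 where ws0: "is_walk E ws0" "hd ws0 = a" "last ws0 = u"
    using nf(6) aV uV unfolding connected_graph_def by blast
  have Nne: "N \<noteq> {}" using key[OF ws0] by auto
  have "Min (g ` N) \<le> vdist E lam a u"
    unfolding vdist_def
  proof (rule cInf_greatest)
    show "{walk_len E lam ws |ws. is_walk E ws \<and> hd ws = a \<and> last ws = u} \<noteq> {}" using ws0 by blast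
    fix r assume "r \<in> {walk_len E lam ws |ws. is_walk E ws \<and> hd ws = a \<and> last ws = u}"
    then obtain ws where "is_walk E ws" "hd ws = a" "last ws = u" "r = walk_len E lam ws" by blast
    then obtain v where "v \<in> N" "g v \<le> r" using key by blast
    then show "Min (g ` N) \<le> r" using finN by (meson Min_le finite_imageI image_eqI order.trans)
  qed
  moreover obtain v where "v \<in> N" "g v = Min (g ` N)"
    using Nne finN by (metis (mono_tags, lifting) Min_in empty_is_image finite_imageI imageE)
  ultimately show ?thesis unfolding N_def g_def by auto
qed

lemma sdist_le_c:
  assumes "(a, ao) \<in> anchors lam p" "(b, bo) \<in> anchors lam q"
  shows "sdist E lam p q \<le> ao + vdist E lam a b + bo"
proof -
  let ?A = "{ao + vdist E lam a b + bo | a ao b bo. (a, ao) \<in> anchors lam p \<and> (b, bo) \<in> anchors lam q}"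
  have fin: "finite ?A" unfolding sdist_set_eq using anchors_finite by auto
  have "Min ?A \<le> ao + vdist E lam a b + bo" using assms fin by (intro Min_le) auto
  then show ?thesis unfolding sdist_def Let_def
    by (auto split: pt.splits prod.splits)
qed

lemma sdist_same_edge: "sdist E lam (Ed e t) (Ed e s) \<le> \<bar>t - s\<bar>"
  unfolding sdist_def Let_def by auto

lemma sdist_cases:
  "(\<exists>a ao b bo. (a, ao) \<in> anchors lam p \<and> (b, bo) \<in> anchors lam q \<and> sdist E lam p q = ao + vdist E lam a b + bo)
   \<or> (\<exists>e t s. p = Ed e t \<and> q = Ed e s \<and> sdist E lam p q = \<bar>t - s\<bar>)"
proof -
  let ?A = "{ao + vdist E lam a b + bo | a ao b bo. (a, ao) \<in> anchors lam p \<and> (b, bo) \<in> anchors lam q}"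
  have fin: "finite ?A" unfolding sdist_set_eq using anchors_finite by auto
  have ne: "?A \<noteq> {}" by (cases p; cases q) auto
  have mi: "Min ?A \<in> ?A" using Min_in[OF fin ne] .
  show ?thesis
  proof (cases "\<exists>e t s. p = Ed e t \<and> q = Ed e s")
    case True
    then obtain e t s where pq: "p = Ed e t" "q = Ed e s" by blast
    have "sdist E lam p q = min (Min ?A) \<bar>t - s\<bar>" unfolding sdist_def Let_def pq by simp
    then show ?thesis using mi pq by (cases "Min ?A \<le> \<bar>t - s\<bar>") (auto simp: min_def)
  next
    case False
    then have "sdist E lam p q = Min ?A" unfolding sdist_def Let_def
      by (auto split: pt.splits)
    then show ?thesis using mi by auto
  qed
qed

lemma deviation:
  assumes iN: "i < n" and qn: "q \<notin> x ` {..<n}" and R: "Rp E lam n x w y"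
    and lt: "sdist E lam y q < sdist E lam y w"
  shows "share E lam n (x(i := q)) i y = 1"
proof -
  let ?x = "x(i := q)"
  let ?O = "?x ` {..<n}"
  have qO: "q \<in> ?O" using iN by (auto simp: image_iff intro!: bexI[of _ i])
  have oth: "z \<in> ?O \<Longrightarrow> z \<noteq> q \<Longrightarrow> sdist E lam y q < sdist E lam y z" for z
  proof -
    assume "z \<in> ?O" "z \<noteq> q"
    then obtain k where "k < n" "k \<noteq> i" "z = x k" by (auto split: if_splits)
    then have "sdist E lam y w \<le> sdist E lam y z" using R unfolding Rp_def by auto
    then show ?thesis using lt by linarith
  qed
  have m: "Min ((\<lambda>z. sdist E lam y z) ` ?O) = sdist E lam y q"
    by (rule Min_eqI) (use qO oth qn in \<open>auto intro: less_imp_le\<close>)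
  have C: "{z \<in> ?O. sdist E lam y z = sdist E lam y q} = {q}"
    using qO oth by fastforce
  have K: "{j. j < n \<and> ?x j = ?x i} = {i}"
    using iN qn by auto
  show ?thesis unfolding share_def Let_def m C K using qO by simp
qed

lemma vdist_nonneg:
  assumes net: "network V E lam" and "a \<in> V" "b \<in> V"
  shows "vdist E lam a b \<ge> 0"
proof -
  note nf = network_facts[OF net]
  obtain ws0 where "is_walk E ws0" "hd ws0 = a" "last ws0 = b"
    using nf(6) assms unfolding connected_graph_def by blast
  then have ne: "{walk_len E lam ws | ws. is_walk E ws \<and> hd ws = a \<and> last ws = b} \<noteq> {}" by blast
  show ?thesis unfolding vdist_def
  proof (rule cInf_greatest[OF ne])
    fix r assume "r \<in> {walk_len E lam ws | ws. is_walk E ws \<and> hd ws = a \<and> last ws = b}"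
    then obtain ws where "is_walk E ws" "r = walk_len E lam ws" by blast
    then show "0 \<le> r" using walk_len_nonneg[of E lam ws] nf(4) unfolding is_walk_def by auto
  qed
qed

lemma ind_interval_integral:
  fixes L e :: real
  assumes "0 \<le> e" "e \<le> L" "T = {0..e} \<or> T = {L - e..L}"
  shows "(\<lambda>t. if t \<in> T then 1 else 0 :: real) integrable_on {0..L}"
    "integral {0..L} (\<lambda>t. if t \<in> T then 1 else 0 :: real) = e"
proof -
  have "{0..L} \<inter> T = T" "T \<inter> {0..L} = T" using assms by auto
  have c: "integral {0..L} (\<lambda>t. if t \<in> T then 1 else 0 :: real) = integral T (\<lambda>t. 1)"
    by (subst integral_restrict_Int) (use \<open>{0..L} \<inter> T = T\<close> \<open>T \<inter> {0..L} = T\<close> in simp)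
  show "integral {0..L} (\<lambda>t. if t \<in> T then 1 else 0 :: real) = e"
    unfolding c using assms by auto
  show "(\<lambda>t. if t \<in> T then 1 else 0 :: real) integrable_on {0..L}"
    by (subst integrable_restrict_Int) (use \<open>{0..L} \<inter> T = T\<close> assms in auto)
qed

lemma eps_le:
  fixes a b :: real
  assumes "\<And>e0. e0 > 0 \<Longrightarrow> \<exists>e. 0 < e \<and> e < e0 \<and> a \<le> b + e"
  shows "a \<le> b"
proof (rule ccontr)
  assume "\<not> a \<le> b"
  then obtain e where "0 < e" "e < a - b" "a \<le> b + e" using assms[of "a - b"] by auto
  then show False by linarith
qed

lemma choose_eps:
  fixes F :: "real set"
  assumes "finite F" "finite Bs" "\<forall>b\<in>Bs. b > 0" "e0 > 0"
  shows "\<exists>\<epsilon>. 0 < \<epsilon> \<and> \<epsilon> < e0 \<and> (\<forall>b\<in>Bs. \<epsilon> < b) \<and> \<epsilon> \<notin> F"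
proof -
  define L where "L = Min (insert e0 Bs)"
  have L0: "L > 0" unfolding L_def using assms by (subst Min_gr_iff) auto
  have "infinite {0<..<L}" using L0 by simp
  then have "{0<..<L} - F \<noteq> {}" using assms(1) by (metis finite_Diff2 finite.emptyI)
  then obtain \<epsilon> where "\<epsilon> \<in> {0<..<L}" "\<epsilon> \<notin> F" by blast
  moreover have "L \<le> e0" "\<forall>b\<in>Bs. L \<le> b" unfolding L_def using assms by auto
  ultimately show ?thesis by force
qed

lemma pt_eq_finite: "finite {\<epsilon>. Ed e0 (f \<epsilon>) = z}" if "inj f" for f :: "real \<Rightarrow> real"
proof (cases z)
  case (Vx v) then show ?thesis by simp
next
  case (Ed e t)
  have "{\<epsilon>. Ed e0 (f \<epsilon>) = z} \<subseteq> f -` {t}" using Ed by auto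
  moreover have "finite (f -` {t})" using that by (simp add: finite_vimageI)
  ultimately show ?thesis by (rule finite_subset)
qed



lemma vertex_case:
  assumes net: "network V E lam" and ne: "nash_eq V E lam n x" and iN: "i < n" and jn: "j < n"
    and xj: "x j = Vx u" and xij: "x i \<noteq> x j"
    and bal: "card {k. k < n \<and> x k = x j} = vdegree E u"
    and e0: "e0 > 0"
  shows "\<exists>\<epsilon>. 0 < \<epsilon> \<and> \<epsilon> < e0 \<and> payoff E lam n x j \<le> payoff E lam n x i + \<epsilon>"
proof -
  note nf = network_facts[OF net]
  have prof: "is_profile V E lam n x" and nash: "\<forall>i<n. \<forall>y\<in>points V E lam. payoff E lam n (x(i := y)) i \<le> payoff E lam n x i"
    using ne unfolding nash_eq_def by auto
  have uV: "u \<in> V" using prof jn xj unfolding is_profile_def points_def by force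
  define I where "I = {e \<in> E. fst e = u \<or> snd e = u}"
  have finI: "finite I" unfolding I_def using nf(2) by simp
  define q where "q \<epsilon> e = (if fst e = u then Ed e \<epsilon> else Ed e (lam e - \<epsilon>))" for \<epsilon> e
  define F where "F = (\<Union>e\<in>I. \<Union>z\<in>x ` {..<n}. {\<epsilon>. q \<epsilon> e = z})"
  have finF: "finite F" unfolding F_def
  proof (intro finite_UN_I finI finite_imageI finite_lessThan)
    fix e z
    show "finite {\<epsilon>. q \<epsilon> e = z}"
    proof (cases "fst e = u")
      case True
      then show ?thesis unfolding q_def using pt_eq_finite[of id e z] by simp
    next
      case False
      have "inj (\<lambda>\<epsilon>::real. lam e - \<epsilon>)" by (auto intro: injI)
      then show ?thesis unfolding q_def using False pt_eq_finite[of "\<lambda>\<epsilon>. lam e - \<epsilon>" e z] by simp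
    qed
  qed
  obtain \<epsilon> where eps: "0 < \<epsilon>" "\<epsilon> < e0" "\<forall>b\<in>lam ` I. \<epsilon> < b" "\<epsilon> \<notin> F"
  proof -
    have "\<forall>b\<in>lam ` I. b > 0" using nf(4) unfolding I_def by auto
    from choose_eps[OF finF finite_imageI[OF finI] this e0] show ?thesis using that by blast
  qed
  have qn: "q \<epsilon> e \<notin> x ` {..<n}" if "e \<in> I" for e
    using eps(4) that unfolding F_def by auto
  have epsl: "\<epsilon> < lam e" if "e \<in> I" for e using eps(3) that by auto
  define T where "T e = (if fst e = u then {0..\<epsilon>} else {lam e - \<epsilon>..lam e})" for e
  define h where "h d e = (\<lambda>t. if e = d then (if t \<in> T d then 1 else 0) else 0 :: real)" for d e
  have hI: "(\<lambda>t. if t \<in> T d then 1 else 0 :: real) integrable_on {0..lam d} \<and>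
            integral {0..lam d} (\<lambda>t. if t \<in> T d then 1 else 0 :: real) = \<epsilon>" if "d \<in> I" for d
    using ind_interval_integral[of \<epsilon> "lam d" "T d"] eps(1) epsl[OF that] unfolding T_def by auto
  have "payoff E lam n x j \<le> payoff E lam n x i + \<epsilon>"
  proof (rule generic[where Dirs = I and q = "q \<epsilon>" and h = h])
    show "finite E" by (rule nf(2))
    show "j < n" "i < n" by (rule jn, rule iN)
    show "\<forall>\<delta>\<in>I. payoff E lam n (x(i := q \<epsilon> \<delta>)) i \<le> payoff E lam n x i"
    proof
      fix d assume d: "d \<in> I"
      have pe: "Ed d s \<in> points V E lam" if "d \<in> E" "0 < s" "s < lam d" for s
        unfolding points_def using that by blast
      have dE: "d \<in> E" using d unfolding I_def by auto
      have "q \<epsilon> d \<in> points V E lam"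
        using pe[OF dE] epsl[OF d] eps(1) unfolding q_def by auto
      then show "payoff E lam n (x(i := q \<epsilon> d)) i \<le> payoff E lam n x i" using nash iN by auto
    qed
    show "card I = card {k. k < n \<and> x k = x j}" unfolding bal I_def vdegree_def ..
    show "finite I" by (rule finI)
    show "\<forall>\<delta>\<in>I. \<forall>e\<in>E. h \<delta> e integrable_on {0..lam e}"
    proof (intro ballI)
      fix d e assume d: "d \<in> I" and "e \<in> E"
      show "h d e integrable_on {0..lam e}"
      proof (cases "e = d")
        case True then show ?thesis using hI[OF d] unfolding h_def by simp
      next
        case False then show ?thesis unfolding h_def by (simp add: integrable_0)
      qed
    qed
    show "\<forall>\<delta> e t. 0 \<le> h \<delta> e t" unfolding h_def by auto
    show "\<forall>\<delta>\<in>I. (\<Sum>e\<in>E. integral {0..lam e} (h \<delta> e)) \<le> \<epsilon>"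
    proof
      fix d assume d: "d \<in> I"
      have "(\<Sum>e\<in>E. integral {0..lam e} (h d e)) = (\<Sum>e\<in>E. if e = d then \<epsilon> else 0)"
        unfolding h_def using hI[OF d] by (intro sum.cong) auto
      also have "\<dots> = \<epsilon>" using d nf(2) unfolding I_def by simp
      finally show "(\<Sum>e\<in>E. integral {0..lam e} (h d e)) \<le> \<epsilon>" by simp
    qed
    show "\<forall>e\<in>E. \<exists>Z. finite Z \<and> (\<forall>t\<in>{0..lam e} - Z. Rp E lam n x (x j) (edge_pt lam e t) \<longrightarrow>
              1 \<le> (\<Sum>\<delta>\<in>I. share E lam n (x(i := q \<epsilon> \<delta>)) i (edge_pt lam e t) + h \<delta> e t))"
    proof
      fix e assume eE: "e \<in> E"
      show "\<exists>Z. finite Z \<and> (\<forall>t\<in>{0..lam e} - Z. Rp E lam n x (x j) (edge_pt lam e t) \<longrightarrow>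
              1 \<le> (\<Sum>\<delta>\<in>I. share E lam n (x(i := q \<epsilon> \<delta>)) i (edge_pt lam e t) + h \<delta> e t))"
      proof (intro exI[of _ "{0, lam e}"] conjI ballI impI)
        fix t assume t: "t \<in> {0..lam e} - {0, lam e}" and R: "Rp E lam n x (x j) (edge_pt lam e t)"
        have y: "edge_pt lam e t = Ed e t" using t unfolding edge_pt_def by auto
        let ?y = "Ed e t"
        have ex: "\<exists>d\<in>I. 1 \<le> share E lam n (x(i := q \<epsilon> d)) i ?y + h d e t"
        proof -
          have dev: "1 \<le> share E lam n (x(i := q \<epsilon> d)) i ?y + h d e t"
            if d: "d \<in> I" and lt: "sdist E lam ?y (q \<epsilon> d) < sdist E lam ?y (Vx u)" for d
            using deviation[OF iN qn[OF d] R[unfolded y xj] lt] unfolding h_def by auto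
          have eV: "fst e \<in> V" "snd e \<in> V" using eE nf(3) by auto
          have ne': "fst e \<noteq> snd e" using eE nf(5)[of "fst e" "snd e"] by auto
          obtain a ao where aa: "(a, ao) \<in> anchors lam ?y" and D: "sdist E lam ?y (Vx u) = ao + vdist E lam a u"
            using sdist_cases[of lam ?y "Vx u" E] by auto
          have aV: "a \<in> V" using aa eV by auto
          show ?thesis
          proof (cases "a = u")
            case True
            have dI: "e \<in> I" using aa True eE unfolding I_def by auto
            have vd0: "vdist E lam u u \<ge> 0" using vdist_nonneg[OF net uV uV] .
            show ?thesis
            proof (cases "t \<in> T e")
              case True
              then show ?thesis using dI share_nonneg[of E lam n "x(i := q \<epsilon> e)" i ?y]
                unfolding h_def by (intro bexI[of _ e]) auto
            next
              case nT: False
              have "sdist E lam ?y (q \<epsilon> e) < sdist E lam ?y (Vx u)"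
              proof (cases "fst e = u")
                case fu: True
                have "sdist E lam ?y (q \<epsilon> e) \<le> \<bar>t - \<epsilon>\<bar>" unfolding q_def using fu sdist_same_edge by simp
                moreover have "ao = t" using aa \<open>a = u\<close> fu ne' by auto
                ultimately show ?thesis using nT fu t D vd0 eps(1) \<open>a = u\<close> unfolding T_def by auto
              next
                case fu: False
                have "sdist E lam ?y (q \<epsilon> e) \<le> \<bar>t - (lam e - \<epsilon>)\<bar>" unfolding q_def using fu sdist_same_edge by simp
                moreover have "ao = lam e - t" using aa \<open>a = u\<close> fu by auto
                ultimately show ?thesis using nT fu t D vd0 eps(1) \<open>a = u\<close> unfolding T_def by auto
              qed
              then show ?thesis using dev[OF dI] dI by blast
            qed
          next
            case False
            obtain v where v: "adj E v u" "vdist E lam a v + elen E lam v u \<le> vdist E lam a u"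
              using bellman[OF net aV uV False] by blast
            define d where "d = (if (u, v) \<in> E then (u, v) else (v, u))"
            have dE: "d \<in> E" using v(1) unfolding d_def adj_def by auto
            have dI: "d \<in> I" using dE unfolding d_def I_def by auto
            have vu: "v \<noteq> u" using v(1) nf(5) unfolding adj_def by blast
            have ld: "lam d = elen E lam v u" using v(1) nf(5)[of u v] unfolding d_def elen_def adj_def by auto
            have anc: "(v, lam d - \<epsilon>) \<in> anchors lam (q \<epsilon> d)"
              unfolding q_def d_def using vu by auto
            have "sdist E lam ?y (q \<epsilon> d) \<le> ao + vdist E lam a v + (lam d - \<epsilon>)"
              by (rule sdist_le_c[OF aa anc])
            then have "sdist E lam ?y (q \<epsilon> d) < sdist E lam ?y (Vx u)"
              using D v(2) ld eps(1) by linarith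
            then show ?thesis using dev[OF dI] dI by blast
          qed
        qed
        then obtain d where d: "d \<in> I" "1 \<le> share E lam n (x(i := q \<epsilon> d)) i ?y + h d e t" by blast
        have "share E lam n (x(i := q \<epsilon> d)) i ?y + h d e t \<le> (\<Sum>\<delta>\<in>I. share E lam n (x(i := q \<epsilon> \<delta>)) i ?y + h \<delta> e t)"
          by (rule member_le_sum[OF d(1) _ finI]) (auto simp: h_def intro: add_nonneg_nonneg share_nonneg)
        then show "1 \<le> (\<Sum>\<delta>\<in>I. share E lam n (x(i := q \<epsilon> \<delta>)) i (edge_pt lam e t) + h \<delta> e t)"
          using d(2) y by simp
      qed simp
    qed
  qed
  then show ?thesis using eps by blast
qed

lemma ind_interval_integral2:
  fixes L c e :: real
  assumes "0 \<le> e" "0 \<le> c" "c + e \<le> L"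
  shows "(\<lambda>t. if t \<in> {c..c+e} then 1 else 0 :: real) integrable_on {0..L}"
    "integral {0..L} (\<lambda>t. if t \<in> {c..c+e} then 1 else 0 :: real) = e"
proof -
  have "{0..L} \<inter> {c..c+e} = {c..c+e}" "{c..c+e} \<inter> {0..L} = {c..c+e}" using assms by auto
  have c: "integral {0..L} (\<lambda>t. if t \<in> {c..c+e} then 1 else 0 :: real) = integral {c..c+e} (\<lambda>t. 1)"
  proof -
    have "integral {0..L} (\<lambda>t. if t \<in> {c..c+e} then 1 else 0 :: real) = integral ({c..c+e} \<inter> {0..L}) (\<lambda>_. 1::real)"
      by (rule integral_restrict_Int)
    then show ?thesis unfolding \<open>{c..c+e} \<inter> {0..L} = {c..c+e}\<close> .
  qed
  have "integral {c..c+e} (\<lambda>t. 1::real) = (c + e) - c"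
    using assms(1) by (simp add: integral_const_real content_real)
  then show "integral {0..L} (\<lambda>t. if t \<in> {c..c+e} then 1 else 0 :: real) = e"
    unfolding c by simp
  show "(\<lambda>t. if t \<in> {c..c+e} then 1 else 0 :: real) integrable_on {0..L}"
  proof -
    have "(\<lambda>_. 1::real) integrable_on ({c..c+e} \<inter> {0..L})"
      unfolding \<open>{c..c+e} \<inter> {0..L} = {c..c+e}\<close> by (rule integrable_const_ivl)
    then show ?thesis using integrable_restrict_Int[of "{c..c+e}" "\<lambda>_. 1::real" "{0..L}"] by simp
  qed
qed

lemma edge_case:
  assumes net: "network V E lam" and ne: "nash_eq V E lam n x" and iN: "i < n" and jn: "j < n"
    and xj: "x j = Ed f s" and xij: "x i \<noteq> x j"
    and bal: "card {k. k < n \<and> x k = x j} = 2"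
    and e0: "e0 > 0"
  shows "\<exists>\<epsilon>. 0 < \<epsilon> \<and> \<epsilon> < e0 \<and> payoff E lam n x j \<le> payoff E lam n x i + \<epsilon>"
proof -
  note nf = network_facts[OF net]
  have prof: "is_profile V E lam n x" and nash: "\<forall>i<n. \<forall>y\<in>points V E lam. payoff E lam n (x(i := y)) i \<le> payoff E lam n x i"
    using ne unfolding nash_eq_def by auto
  have fs: "f \<in> E" "0 < s" "s < lam f" using prof jn xj unfolding is_profile_def points_def by force+
  define q where "q \<epsilon> b = (if b then Ed f (s - \<epsilon>) else Ed f (s + \<epsilon>))" for \<epsilon> and b :: bool
  define F where "F = (\<Union>b\<in>UNIV. \<Union>z\<in>x ` {..<n}. {\<epsilon>. q \<epsilon> b = z})"
  have finF: "finite F" unfolding F_def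
  proof (intro finite_UN_I finite finite_imageI finite_lessThan)
    fix b z
    show "finite {\<epsilon>. q \<epsilon> b = z}"
    proof (cases b)
      case True
      have "inj (\<lambda>\<epsilon>::real. s - \<epsilon>)" by (auto intro: injI)
      then show ?thesis unfolding q_def using True pt_eq_finite[of "\<lambda>\<epsilon>. s - \<epsilon>" f z] by simp
    next
      case False
      have "inj (\<lambda>\<epsilon>::real. s + \<epsilon>)" by (auto intro: injI)
      then show ?thesis unfolding q_def using False pt_eq_finite[of "\<lambda>\<epsilon>. s + \<epsilon>" f z] by simp
    qed
  qed
  obtain \<epsilon> where eps: "0 < \<epsilon>" "\<epsilon> < e0" "\<forall>b\<in>{s, lam f - s}. \<epsilon> < b" "\<epsilon> \<notin> F"
  proof -
    have "\<forall>b\<in>{s, lam f - s}. b > 0" using fs by auto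
    from choose_eps[OF finF _ this e0] show ?thesis using that by blast
  qed
  have qn: "q \<epsilon> b \<notin> x ` {..<n}" for b
    using eps(4) unfolding F_def by auto
  have e1: "\<epsilon> < s" "\<epsilon> < lam f - s" using eps(3) by auto
  define T where "T b = (if b then {s - \<epsilon>..s - \<epsilon> + \<epsilon>} else {s..s + \<epsilon>})" for b :: bool
  define h where "h b e = (\<lambda>t. if e = f then (if t \<in> T b then 1 else 0) else 0 :: real)" for b e
  have hI: "(\<lambda>t. if t \<in> T b then 1 else 0 :: real) integrable_on {0..lam f} \<and>
            integral {0..lam f} (\<lambda>t. if t \<in> T b then 1 else 0 :: real) = \<epsilon>" for b
  proof (cases b)
    case True
    then show ?thesis using ind_interval_integral2[of \<epsilon> "s - \<epsilon>" "lam f"] eps(1) e1 unfolding T_def by auto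
  next
    case False
    then show ?thesis using ind_interval_integral2[of \<epsilon> "s" "lam f"] eps(1) e1 fs unfolding T_def by auto
  qed
  have "payoff E lam n x j \<le> payoff E lam n x i + \<epsilon>"
  proof (rule generic[where Dirs = UNIV and q = "q \<epsilon>" and h = h])
    show "finite E" by (rule nf(2))
    show "j < n" "i < n" by (rule jn, rule iN)
    show "\<forall>\<delta>\<in>UNIV. payoff E lam n (x(i := q \<epsilon> \<delta>)) i \<le> payoff E lam n x i"
    proof
      fix d :: bool
      have pe: "Ed f t \<in> points V E lam" if "0 < t" "t < lam f" for t
        unfolding points_def using that fs by blast
      have "q \<epsilon> d \<in> points V E lam"
        using pe e1 eps(1) fs unfolding q_def by auto
      then show "payoff E lam n (x(i := q \<epsilon> d)) i \<le> payoff E lam n x i" using nash iN by auto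
    qed
    show "card (UNIV :: bool set) = card {k. k < n \<and> x k = x j}" unfolding bal by simp
    show "finite (UNIV :: bool set)" by simp
    show "\<forall>\<delta>\<in>UNIV. \<forall>e\<in>E. h \<delta> e integrable_on {0..lam e}"
    proof (intro ballI)
      fix d e assume "e \<in> E"
      show "h d e integrable_on {0..lam e}"
      proof (cases "e = f")
        case True then show ?thesis using hI[of d] unfolding h_def by simp
      next
        case False then show ?thesis unfolding h_def by (simp add: integrable_0)
      qed
    qed
    show "\<forall>\<delta> e t. 0 \<le> h \<delta> e t" unfolding h_def by auto
    show "\<forall>\<delta>\<in>UNIV. (\<Sum>e\<in>E. integral {0..lam e} (h \<delta> e)) \<le> \<epsilon>"
    proof
      fix d :: bool
      have "(\<Sum>e\<in>E. integral {0..lam e} (h d e)) = (\<Sum>e\<in>E. if e = f then \<epsilon> else 0)"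
        unfolding h_def using hI[of d] by (intro sum.cong) auto
      also have "\<dots> = \<epsilon>" using fs nf(2) by simp
      finally show "(\<Sum>e\<in>E. integral {0..lam e} (h d e)) \<le> \<epsilon>" by simp
    qed
    show "\<forall>e\<in>E. \<exists>Z. finite Z \<and> (\<forall>t\<in>{0..lam e} - Z. Rp E lam n x (x j) (edge_pt lam e t) \<longrightarrow>
              1 \<le> (\<Sum>\<delta>\<in>UNIV. share E lam n (x(i := q \<epsilon> \<delta>)) i (edge_pt lam e t) + h \<delta> e t))"
    proof
      fix e assume eE: "e \<in> E"
      show "\<exists>Z. finite Z \<and> (\<forall>t\<in>{0..lam e} - Z. Rp E lam n x (x j) (edge_pt lam e t) \<longrightarrow>
              1 \<le> (\<Sum>\<delta>\<in>UNIV. share E lam n (x(i := q \<epsilon> \<delta>)) i (edge_pt lam e t) + h \<delta> e t))"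
      proof (intro exI[of _ "{0, lam e, s}"] conjI ballI impI)
        fix t assume t: "t \<in> {0..lam e} - {0, lam e, s}" and R: "Rp E lam n x (x j) (edge_pt lam e t)"
        have y: "edge_pt lam e t = Ed e t" using t unfolding edge_pt_def by auto
        let ?y = "Ed e t"
        have ex: "\<exists>d. 1 \<le> share E lam n (x(i := q \<epsilon> d)) i ?y + h d e t"
        proof -
          have dev: "1 \<le> share E lam n (x(i := q \<epsilon> d)) i ?y + h d e t"
            if lt: "sdist E lam ?y (q \<epsilon> d) < sdist E lam ?y (Ed f s)" for d
            using deviation[OF iN qn R[unfolded y xj] lt] unfolding h_def by auto
          have hone: "1 \<le> share E lam n (x(i := q \<epsilon> d)) i ?y + h d e t" if "e = f" "t \<in> T d" for d
            using that share_nonneg[of E lam n "x(i := q \<epsilon> d)" i ?y] unfolding h_def by auto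
          consider (A) a ao b bo where "(a, ao) \<in> anchors lam ?y" "(b, bo) \<in> anchors lam (Ed f s)"
                "sdist E lam ?y (Ed f s) = ao + vdist E lam a b + bo"
            | (B) "e = f" "sdist E lam ?y (Ed f s) = \<bar>t - s\<bar>"
            using sdist_cases[of lam ?y "Ed f s" E] by auto
          then show ?thesis
          proof cases
            case A
            show ?thesis
            proof (cases "(b, bo) = (fst f, s)")
              case True
              have anc: "(fst f, s - \<epsilon>) \<in> anchors lam (q \<epsilon> True)" unfolding q_def by simp
              have "sdist E lam ?y (q \<epsilon> True) \<le> ao + vdist E lam a (fst f) + (s - \<epsilon>)"
                by (rule sdist_le_c[OF A(1) anc])
              then have "sdist E lam ?y (q \<epsilon> True) < sdist E lam ?y (Ed f s)"
                using A(3) True eps(1) by auto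
              then show ?thesis using dev by blast
            next
              case False
              then have bb: "(b, bo) = (snd f, lam f - s)" using A(2) by auto
              have anc: "(snd f, lam f - s - \<epsilon>) \<in> anchors lam (q \<epsilon> False)" unfolding q_def by simp
              have "sdist E lam ?y (q \<epsilon> False) \<le> ao + vdist E lam a (snd f) + (lam f - s - \<epsilon>)"
                by (rule sdist_le_c[OF A(1) anc])
              then have "sdist E lam ?y (q \<epsilon> False) < sdist E lam ?y (Ed f s)"
                using A(3) bb eps(1) by auto
              then show ?thesis using dev by blast
            qed
          next
            case B
            have ts: "t \<noteq> s" using t by auto
            show ?thesis
            proof (cases "t < s")
              case True
              show ?thesis
              proof (cases "t \<in> T True")
                case True then show ?thesis using hone B(1) by blast
              next
                case False
                then have "t < s - \<epsilon>" using \<open>t < s\<close> unfolding T_def by auto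
                moreover have "sdist E lam ?y (q \<epsilon> True) \<le> \<bar>t - (s - \<epsilon>)\<bar>"
                  unfolding q_def using B(1) sdist_same_edge by simp
                ultimately have "sdist E lam ?y (q \<epsilon> True) < sdist E lam ?y (Ed f s)"
                  using B(2) eps(1) by auto
                then show ?thesis using dev by blast
              qed
            next
              case False
              then have ts': "s < t" using ts by auto
              show ?thesis
              proof (cases "t \<in> T False")
                case True then show ?thesis using hone B(1) by blast
              next
                case False
                then have "s + \<epsilon> < t" using ts' unfolding T_def by auto
                moreover have "sdist E lam ?y (q \<epsilon> False) \<le> \<bar>t - (s + \<epsilon>)\<bar>"
                  unfolding q_def using B(1) sdist_same_edge by simp
                ultimately have "sdist E lam ?y (q \<epsilon> False) < sdist E lam ?y (Ed f s)"
                  using B(2) eps(1) by auto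
                then show ?thesis using dev by blast
              qed
            qed
          qed
        qed
        then obtain d where d: "1 \<le> share E lam n (x(i := q \<epsilon> d)) i ?y + h d e t" by blast
        have "share E lam n (x(i := q \<epsilon> d)) i ?y + h d e t \<le> (\<Sum>\<delta>\<in>UNIV. share E lam n (x(i := q \<epsilon> \<delta>)) i ?y + h \<delta> e t)"
          by (rule member_le_sum) (auto simp: h_def intro: add_nonneg_nonneg share_nonneg)
        then show "1 \<le> (\<Sum>\<delta>\<in>UNIV. share E lam n (x(i := q \<epsilon> \<delta>)) i (edge_pt lam e t) + h \<delta> e t)"
          using d y by simp
      qed simp
    qed
  qed
  then show ?thesis using eps by blast
qed


lemma one_dir:
  assumes net: "network V E lam" and ne: "nash_eq V E lam n x" and iN: "i < n"
    and bj: "balanced E n x j" and xij: "x i \<noteq> x j"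
  shows "payoff E lam n x j \<le> payoff E lam n x i"
proof (rule eps_le)
  fix e0 :: real assume e0: "e0 > 0"
  have jn: "j < n" and bal: "card {k. k < n \<and> x k = x j} = pdegree E (x j)"
    using bj unfolding balanced_def by auto
  show "\<exists>e. 0 < e \<and> e < e0 \<and> payoff E lam n x j \<le> payoff E lam n x i + e"
  proof (cases "x j")
    case (Vx u)
    show ?thesis by (rule vertex_case[OF net ne iN jn Vx xij _ e0]) (use bal Vx in simp)
  next
    case (Ed f s)
    show ?thesis by (rule edge_case[OF net ne iN jn Ed xij _ e0]) (use bal Ed in simp)
  qed
qed

theorem mainTheorem8:
  fixes V :: "'v set" and E :: "('v \<times> 'v) set" and lam :: "'v \<times> 'v \<Rightarrow> real"
    and n :: nat and x :: "nat \<Rightarrow> 'v pt"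
  assumes "network V E lam"
    and "n \<ge> 2"
    and "nash_eq V E lam n x"
  shows "\<forall>i j. balanced E n x i \<and> balanced E n x j \<longrightarrow> payoff E lam n x i = payoff E lam n x j"
proof (intro allI impI)
  fix i j assume b: "balanced E n x i \<and> balanced E n x j"
  then have iN: "i < n" and jn: "j < n" unfolding balanced_def by auto
  show "payoff E lam n x i = payoff E lam n x j"
  proof (cases "x i = x j")
    case True
    then show ?thesis unfolding payoff_def share_def by (simp only: True)
  next
    case False
    have "payoff E lam n x j \<le> payoff E lam n x i"
      using one_dir[OF assms(1) assms(3) iN _ False] b by blast
    moreover have "payoff E lam n x i \<le> payoff E lam n x j"
      using one_dir[OF assms(1) assms(3) jn _ ] b False by metis
    ultimately show ?thesis by linarith
  qed
qed

end
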